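(* Let $n\ge3$, $\boldsymbol\ell$ positive lengths, $\mu,\tau^*\in\mathbb{R}$, $N>0$ a smooth function on $T^n$ depending only on $s^1$, and $Z=z(s^1)\partial_{s^1}$ a smooth vector field. Consider the CTS-H$^{**}$ conformal data set $(g_{\boldsymbol\ell},\mu\sigma^\flat_{\boldsymbol\ell},\tau^*,Z,N)$. (1) If $\mu$ and $\tau^*$ are nonzero and have the same sign, then $\phi\equiv c=(\mu/\tau^* )^{1/q}$, $W=Z$ is a solution of the CTS-H$^{**}$ equations, and the generated solution of the constraint equations is $$\bar g=g_{r\boldsymbol\ell},\qquad \bar K=\bar\tau\,(r\ell_1)^2(ds^1)^2,\qquad \bar\tau=\tau^*+c^{-q}\tfrac1N\mathrm{div}_{g_{\boldsymbol\ell}}Z,\qquad r=c^{(q-2)/2}=(\mu/\tau^* )^{1/n}.$$ (2) If $\mu=\tau^*=0$, then for every $c>0$, $\phi\equiv c$, $W=Z$ is a solution of the CTS-H$^{**}$ equations, and the associated solution of the constraint equations is $\bar g=g_{r\boldsymbol\ell}$, $\bar K=\bar\tau(r\ell_1)^2(ds^1)^2$ with $\bar\tau=c^{-q}\frac1N\mathrm{div}_{g_{\boldsymbol\ell}}Z$ and $r=c^{(q-2)/2}$.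
   Context: $q=\frac{2n}{n-2}$, $\kappa=\frac{n-1}{n}$. $T^n=(\mathbb{R}/\mathbb{Z})^n$ with unit coordinates $(s^1,\ldots,s^n)$; $g_{\boldsymbol\ell}=\sum_k\ell_k^2(ds^k)^2$; $r\boldsymbol\ell=(r\ell_1,\ldots,r\ell_n)$; $\sigma^\flat_{\boldsymbol\ell}=\kappa\ell_1^2(ds^1)^2-\frac1n\sum_{k\ge2}\ell_k^2(ds^k)^2$ (transverse-traceless for $g_{\boldsymbol\ell}$). $\mathcal{L}_gW=L_Wg-\frac2n(\mathrm{div}_gW)g$. CTS-H$^{**}$ (drift-parameterized mean curvature) method: data $(g,\sigma,\tau^*,Z,N)$ with $\sigma$ transverse-traceless, $\tau^*$ constant, $Z$ a vector field (the drift), $N>0$. A solution of the CTS-H$^{**}$ equations is a pair $(\phi,W)$, $\phi>0$, $W$ a vector field, such that $$\bar g=\phi^{q-2}g,\qquad \bar K=\phi^{-2}\Big(\sigma+\tfrac1{2N}\mathcal{L}_gW\Big)+\frac{\tau^*+\frac{\phi^{-2q}}{N}\mathrm{div}_g(\phi^qZ)}{n}\bar g$$ solves the Einstein constraint equations $R_{\bar g}-|\bar K|^2+(\mathrm{tr}\bar K)^2=0$, $\mathrm{div}_{\bar g}\bar K=d\,\mathrm{tr}_{\bar g}\bar K$; this is the generated solution. *)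

theory Defs
  imports "HOL-Analysis.Analysis"
begin

text \<open>Points are
  represented by coordinates x :: real^'n; functions on T^n are Z^n-periodic
  functions on R^n.  The distinguished coordinate s^1 is an arbitrary fixed
  index a :: 'n.  Symmetric 2-tensors are matrix-valued functions
  real^'n => real^'n^'n (entries T x $ i $ j), vector fields are
  functions real^'n => real^'n.\<close>

definition qexp :: "nat \<Rightarrow> real" where
  "qexp n = 2 * real n / (real n - 2)"

definition kappa :: "nat \<Rightarrow> real" where
  "kappa n = (real n - 1) / real n"

definition pd :: "'n::finite \<Rightarrow> (real^'n \<Rightarrow> real) \<Rightarrow> real^'n \<Rightarrow> real" where
  "pd i f x = deriv (\<lambda>t. f (x + t *\<^sub>R axis i 1)) 0"

fun pds :: "'n::finite list \<Rightarrow> (real^'n \<Rightarrow> real) \<Rightarrow> real^'n \<Rightarrow> real" where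
  "pds [] f = f"
| "pds (i # is) f = pd i (pds is f)"

definition smooth_fun :: "(real^'n::finite \<Rightarrow> real) \<Rightarrow> bool" where
  "smooth_fun f \<longleftrightarrow> (\<forall>is. continuous_on UNIV (pds is f) \<and>
      (\<forall>i x. (\<lambda>t. pds is f (x + t *\<^sub>R axis i 1)) differentiable (at 0)))"

definition periodic_fun :: "(real^'n::finite \<Rightarrow> 'b) \<Rightarrow> bool" where
  "periodic_fun f \<longleftrightarrow> (\<forall>x i. f (x + axis i 1) = f x)"

definition torus_fun :: "(real^'n::finite \<Rightarrow> real) \<Rightarrow> bool" where
  "torus_fun f \<longleftrightarrow> smooth_fun f \<and> periodic_fun f"

definition torus_vf :: "(real^'n::finite \<Rightarrow> real^'n) \<Rightarrow> bool" where
  "torus_vf W \<longleftrightarrow> (\<forall>i. torus_fun (\<lambda>x. W x $ i))"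

definition smooth_real :: "(real \<Rightarrow> real) \<Rightarrow> bool" where
  "smooth_real f \<longleftrightarrow> (\<forall>k x. ((deriv ^^ k) f) differentiable (at x))"

definition ginv :: "(real^'n::finite \<Rightarrow> real^'n^'n) \<Rightarrow> real^'n \<Rightarrow> real^'n^'n" where
  "ginv g x = matrix_inv (g x)"

definition christ :: "(real^'n::finite \<Rightarrow> real^'n^'n) \<Rightarrow> 'n \<Rightarrow> 'n \<Rightarrow> 'n \<Rightarrow> real^'n \<Rightarrow> real" where
  "christ g k i j x = (\<Sum>l\<in>UNIV. ginv g x $ k $ l *
      (pd i (\<lambda>y. g y $ j $ l) x + pd j (\<lambda>y. g y $ i $ l) x - pd l (\<lambda>y. g y $ i $ j) x)) / 2"

definition ricci :: "(real^'n::finite \<Rightarrow> real^'n^'n) \<Rightarrow> 'n \<Rightarrow> 'n \<Rightarrow> real^'n \<Rightarrow> real" where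
  "ricci g j k x = (\<Sum>i\<in>UNIV. pd i (christ g i j k) x - pd j (christ g i i k) x
      + (\<Sum>p\<in>UNIV. christ g i i p x * christ g p j k x - christ g i j p x * christ g p i k x))"

definition scalar_curv :: "(real^'n::finite \<Rightarrow> real^'n^'n) \<Rightarrow> real^'n \<Rightarrow> real" where
  "scalar_curv g x = (\<Sum>j\<in>UNIV. \<Sum>k\<in>UNIV. ginv g x $ j $ k * ricci g j k x)"

definition trace_g :: "(real^'n::finite \<Rightarrow> real^'n^'n) \<Rightarrow> (real^'n \<Rightarrow> real^'n^'n) \<Rightarrow> real^'n \<Rightarrow> real" where
  "trace_g g K x = (\<Sum>i\<in>UNIV. \<Sum>j\<in>UNIV. ginv g x $ i $ j * K x $ i $ j)"

definition normsq_g :: "(real^'n::finite \<Rightarrow> real^'n^'n) \<Rightarrow> (real^'n \<Rightarrow> real^'n^'n) \<Rightarrow> real^'n \<Rightarrow> real" where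
  "normsq_g g K x = (\<Sum>i\<in>UNIV. \<Sum>j\<in>UNIV. \<Sum>k\<in>UNIV. \<Sum>l\<in>UNIV.
      ginv g x $ i $ k * ginv g x $ j $ l * K x $ i $ j * K x $ k $ l)"

definition cov_deriv2 :: "(real^'n::finite \<Rightarrow> real^'n^'n) \<Rightarrow> (real^'n \<Rightarrow> real^'n^'n) \<Rightarrow> 'n \<Rightarrow> 'n \<Rightarrow> 'n \<Rightarrow> real^'n \<Rightarrow> real" where
  "cov_deriv2 g K k i j x = pd k (\<lambda>y. K y $ i $ j) x
      - (\<Sum>p\<in>UNIV. christ g p k i x * K x $ p $ j)
      - (\<Sum>p\<in>UNIV. christ g p k j x * K x $ i $ p)"

definition div_tensor :: "(real^'n::finite \<Rightarrow> real^'n^'n) \<Rightarrow> (real^'n \<Rightarrow> real^'n^'n) \<Rightarrow> 'n \<Rightarrow> real^'n \<Rightarrow> real" where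
  "div_tensor g K j x = (\<Sum>i\<in>UNIV. \<Sum>k\<in>UNIV. ginv g x $ i $ k * cov_deriv2 g K k i j x)"

definition div_vf :: "(real^'n::finite \<Rightarrow> real^'n^'n) \<Rightarrow> (real^'n \<Rightarrow> real^'n) \<Rightarrow> real^'n \<Rightarrow> real" where
  "div_vf g W x = (\<Sum>i\<in>UNIV. pd i (\<lambda>y. W y $ i) x + (\<Sum>p\<in>UNIV. christ g i i p x * W x $ p))"

definition lie_metric :: "(real^'n::finite \<Rightarrow> real^'n^'n) \<Rightarrow> (real^'n \<Rightarrow> real^'n) \<Rightarrow> real^'n \<Rightarrow> real^'n^'n" where
  "lie_metric g W x = (\<chi> i j. \<Sum>k\<in>UNIV. W x $ k * pd k (\<lambda>y. g y $ i $ j) x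
      + g x $ k $ j * pd i (\<lambda>y. W y $ k) x + g x $ i $ k * pd j (\<lambda>y. W y $ k) x)"

definition conf_killing :: "(real^'n::finite \<Rightarrow> real^'n^'n) \<Rightarrow> (real^'n \<Rightarrow> real^'n) \<Rightarrow> real^'n \<Rightarrow> real^'n^'n" where
  "conf_killing g W x = lie_metric g W x - (2 / real CARD('n) * div_vf g W x) *\<^sub>R g x"

definition constraint_eqs :: "(real^'n::finite \<Rightarrow> real^'n^'n) \<Rightarrow> (real^'n \<Rightarrow> real^'n^'n) \<Rightarrow> bool" where
  "constraint_eqs gb Kb \<longleftrightarrow>
     (\<forall>x. scalar_curv gb x - normsq_g gb Kb x + (trace_g gb Kb x)\<^sup>2 = 0) \<and>
     (\<forall>x j. div_tensor gb Kb j x = pd j (trace_g gb Kb) x)"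

definition cts_gbar :: "(real^'n::finite \<Rightarrow> real^'n^'n) \<Rightarrow> (real^'n \<Rightarrow> real) \<Rightarrow> real^'n \<Rightarrow> real^'n^'n" where
  "cts_gbar g \<phi> x = (\<phi> x powr (qexp CARD('n) - 2)) *\<^sub>R g x"

definition cts_Kbar :: "(real^'n::finite \<Rightarrow> real^'n^'n) \<Rightarrow> (real^'n \<Rightarrow> real^'n^'n) \<Rightarrow> real
    \<Rightarrow> (real^'n \<Rightarrow> real^'n) \<Rightarrow> (real^'n \<Rightarrow> real) \<Rightarrow> (real^'n \<Rightarrow> real) \<Rightarrow> (real^'n \<Rightarrow> real^'n)
    \<Rightarrow> real^'n \<Rightarrow> real^'n^'n" where
  "cts_Kbar g \<sigma> \<tau> Z N \<phi> W x =
     (\<phi> x powr (-2)) *\<^sub>R (\<sigma> x + (1 / (2 * N x)) *\<^sub>R conf_killing g W x)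
     + ((\<tau> + \<phi> x powr (- 2 * qexp CARD('n)) / N x
            * div_vf g (\<lambda>y. (\<phi> y powr qexp CARD('n)) *\<^sub>R Z y) x) / real CARD('n))
       *\<^sub>R cts_gbar g \<phi> x"

definition cts_solution :: "(real^'n::finite \<Rightarrow> real^'n^'n) \<Rightarrow> (real^'n \<Rightarrow> real^'n^'n) \<Rightarrow> real
    \<Rightarrow> (real^'n \<Rightarrow> real^'n) \<Rightarrow> (real^'n \<Rightarrow> real) \<Rightarrow> (real^'n \<Rightarrow> real) \<Rightarrow> (real^'n \<Rightarrow> real^'n) \<Rightarrow> bool" where
  "cts_solution g \<sigma> \<tau> Z N \<phi> W \<longleftrightarrow>
     (\<forall>x. \<phi> x > 0) \<and> torus_fun \<phi> \<and> torus_vf W \<and>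
     constraint_eqs (cts_gbar g \<phi>) (cts_Kbar g \<sigma> \<tau> Z N \<phi> W)"

definition g_flat :: "real^'n::finite \<Rightarrow> real^'n \<Rightarrow> real^'n^'n" where
  "g_flat l x = (\<chi> i j. if i = j then (l $ i)\<^sup>2 else 0)"

definition sigma_flat :: "'n::finite \<Rightarrow> real^'n \<Rightarrow> real^'n \<Rightarrow> real^'n^'n" where
  "sigma_flat a l x = (\<chi> i j. if i = j then (if i = a then kappa CARD('n) * (l $ a)\<^sup>2
                                         else - (1 / real CARD('n)) * (l $ i)\<^sup>2) else 0)"

definition dsq :: "'n::finite \<Rightarrow> real^'n^'n" where
  "dsq a = (\<chi> i j. if i = a \<and> j = a then 1 else 0)"

end

theory Submission
  imports Defs
begin


lemma deriv_const0: "deriv (\<lambda>t::real. (c::real)) x = 0"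
  by (rule DERIV_imp_deriv) (rule DERIV_const)

lemma pd_const[simp]: "pd i (\<lambda>_. c) x = 0"
  unfolding pd_def by (rule deriv_const0)

lemma deriv_shift_eq: "deriv (\<lambda>t. h (s + t)) 0 = deriv h (s::real)"
proof -
  have "\<And>D. ((\<lambda>t. h (s + t)) has_field_derivative D) (at 0) \<longleftrightarrow> (h has_field_derivative D) (at s)"
    using DERIV_shift[of h _ 0 s] by (simp add: add.commute)
  then show ?thesis unfolding deriv_def by simp
qed

lemma pd_coord: "pd i (\<lambda>y. h (y $ a)) x = (if i = a then deriv h (x $ a) else 0)"
proof (cases "i = a")
  case True
  then show ?thesis unfolding pd_def by (simp add: deriv_shift_eq)
next
  case False
  then show ?thesis unfolding pd_def by (simp add: axis_def deriv_const0)
qed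

lemma matrix_inv_eq:
  fixes A B :: "real^'n^'n"
  assumes "A ** B = mat 1" "B ** A = mat 1"
  shows "matrix_inv A = B"
proof -
  have ex: "\<exists>A'. A ** A' = mat 1 \<and> A' ** A = mat 1" using assms by blast
  define C where "C = matrix_inv A"
  have C: "A ** C = mat 1 \<and> C ** A = mat 1"
    unfolding C_def matrix_inv_def by (rule someI_ex[OF ex])
  have "C = C ** (A ** B)" using assms by (simp add: matrix_mul_rid)
  also have "\<dots> = (C ** A) ** B" by (simp add: matrix_mul_assoc)
  also have "\<dots> = B" using C by (simp add: matrix_mul_lid)
  finally show ?thesis unfolding C_def .
qed

lemma ginv_flat:
  fixes m :: "real^'n::finite"
  assumes "\<forall>k. m $ k \<noteq> 0"
  shows "ginv (g_flat m) x = (\<chi> i j. if i = j then 1 / (m $ i)\<^sup>2 else 0)"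
  unfolding ginv_def
proof (rule matrix_inv_eq)
  have "\<And>i j. (\<Sum>k\<in>UNIV. (if i = k then (m $ i)\<^sup>2 else 0) * (if k = j then 1 / (m $ k)\<^sup>2 else 0))
     = (if i = j then 1 else (0::real))"
  proof -
    fix i j :: 'n
    have "(\<Sum>k\<in>UNIV. (if i = k then (m $ i)\<^sup>2 else 0) * (if k = j then 1 / (m $ k)\<^sup>2 else 0))
        = (\<Sum>k\<in>UNIV. if k = i then (m $ i)\<^sup>2 * (if i = j then 1 / (m $ i)\<^sup>2 else 0) else (0::real))"
      by (rule sum.cong) auto
    also have "\<dots> = (if i = j then 1 else 0)" using assms by simp
    finally show "?thesis i j" .
  qed
  moreover have "\<And>i j. (\<Sum>k\<in>UNIV. (if i = k then 1 / (m $ i)\<^sup>2 else 0) * (if k = j then (m $ k)\<^sup>2 else 0))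
     = (if i = j then 1 else (0::real))"
  proof -
    fix i j :: 'n
    have "(\<Sum>k\<in>UNIV. (if i = k then 1 / (m $ i)\<^sup>2 else 0) * (if k = j then (m $ k)\<^sup>2 else 0))
        = (\<Sum>k\<in>UNIV. if k = i then 1 / (m $ i)\<^sup>2 * (if i = j then (m $ i)\<^sup>2 else 0) else (0::real))"
      by (rule sum.cong) auto
    also have "\<dots> = (if i = j then 1 else 0)" using assms by simp
    finally show "?thesis i j" .
  qed
  ultimately show "g_flat m x ** (\<chi> i j. if i = j then 1 / (m $ i)\<^sup>2 else 0) = mat 1"
     "(\<chi> i j. if i = j then 1 / (m $ i)\<^sup>2 else 0) ** g_flat m x = mat 1"
    by (simp_all add: matrix_matrix_mult_def g_flat_def mat_def vec_eq_iff)
qed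


lemma christ_flat[simp]: "christ (g_flat m) k i j = (\<lambda>_. 0)"
  by (simp add: fun_eq_iff christ_def g_flat_def)

lemma scalar_flat[simp]: "scalar_curv (g_flat m) x = 0"
  by (simp add: scalar_curv_def ricci_def)

lemma dsq_nth[simp]: "dsq a $ i $ j = (if i = a \<and> j = a then 1 else 0)"
  by (simp add: dsq_def)

lemma sum_delta2[simp]: "(\<Sum>i\<in>(UNIV::'n::finite set). \<Sum>j\<in>(UNIV::'n set). if i = a \<and> j = a then c else 0) = (c::real)"
proof -
  have "\<And>i. (\<Sum>j\<in>(UNIV::'n set). if i = a \<and> j = a then c else 0) = (if i = a then c else 0)"
    by (simp add: sum.delta)
  then show ?thesis by simp
qed

lemma sum_delta4[simp]: "(\<Sum>i\<in>(UNIV::'n::finite set). \<Sum>j\<in>(UNIV::'n set). \<Sum>k\<in>(UNIV::'n set). \<Sum>l\<in>(UNIV::'n set).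
   if i = a \<and> j = a \<and> k = a \<and> l = a then c else 0) = (c::real)"
proof -
  have "\<And>i j k. (\<Sum>l\<in>(UNIV::'n set). if i = a \<and> j = a \<and> k = a \<and> l = a then c else 0) = (if i = a \<and> j = a \<and> k = a then c else 0)"
    subgoal for i j k by (cases "i = a \<and> j = a \<and> k = a") (auto simp: sum.delta intro!: sum.neutral)
    done
  moreover have "\<And>i j. (\<Sum>k\<in>(UNIV::'n set). if i = a \<and> j = a \<and> k = a then c else 0) = (if i = a \<and> j = a then c else 0)"
    subgoal for i j by (cases "i = a \<and> j = a") (auto simp: sum.delta intro!: sum.neutral)
    done
  ultimately show ?thesis by simp
qed

lemma constraint_flat:
  fixes m :: "real^'n::finite" and f :: "real \<Rightarrow> real"
  assumes mpos: "\<forall>k. m $ k \<noteq> 0" and fd: "\<And>s. f differentiable (at s)"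
  shows "constraint_eqs (g_flat m) (\<lambda>x. f (x $ a) *\<^sub>R dsq a)"
proof -
  have gi: "\<And>x i j. ginv (g_flat m) x $ i $ j = (if i = j then 1 / (m $ i)\<^sup>2 else 0)"
    using ginv_flat[OF mpos] by simp
  have tr: "\<And>x. trace_g (g_flat m) (\<lambda>x. f (x $ a) *\<^sub>R dsq a) x = f (x $ a) / (m $ a)\<^sup>2"
    unfolding trace_g_def gi by (simp add: if_distrib if_distribR sum.delta cong: if_cong)
  have ns: "\<And>x. normsq_g (g_flat m) (\<lambda>x. f (x $ a) *\<^sub>R dsq a) x = (f (x $ a) / (m $ a)\<^sup>2)\<^sup>2"
  proof -
    fix x
    let ?v = "(f (x $ a) / (m $ a)\<^sup>2)\<^sup>2"
    have "\<And>i j k l. ginv (g_flat m) x $ i $ k * ginv (g_flat m) x $ j $ l *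
       (f (x $ a) *\<^sub>R dsq a) $ i $ j * (f (x $ a) *\<^sub>R dsq a) $ k $ l
       = (if i = a \<and> j = a \<and> k = a \<and> l = a then ?v else 0)"
      unfolding gi by (auto simp: power2_eq_square)
    then show "?thesis x" unfolding normsq_g_def by simp
  qed
  have pdK: "\<And>x k i j. pd k (\<lambda>y. (f (y $ a) *\<^sub>R dsq a) $ i $ j) x
      = (if i = a \<and> j = a \<and> k = a then deriv f (x $ a) else 0)"
  proof -
    fix x k i j
    have "(\<lambda>y. (f (y $ a) *\<^sub>R dsq a) $ i $ j) = (\<lambda>y. (\<lambda>s. if i = a \<and> j = a then f s else 0) (y $ a))"
      by auto
    then show "?thesis x k i j"
      using pd_coord[of k "\<lambda>s. if i = a \<and> j = a then f s else 0" a x]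
      by (cases "i = a \<and> j = a") (auto simp: deriv_const0)
  qed
  have dt: "\<And>x j. div_tensor (g_flat m) (\<lambda>x. f (x $ a) *\<^sub>R dsq a) j x
     = (if j = a then deriv f (x $ a) / (m $ a)\<^sup>2 else 0)"
  proof -
    fix x j
    have "\<And>i k. ginv (g_flat m) x $ i $ k * cov_deriv2 (g_flat m) (\<lambda>x. f (x $ a) *\<^sub>R dsq a) k i j x
      = (if i = a \<and> k = a then (if j = a then deriv f (x $ a) / (m $ a)\<^sup>2 else 0) else 0)"
      unfolding cov_deriv2_def gi pdK using mpos by (auto simp: field_simps)
    then show "?thesis x j" unfolding div_tensor_def by (simp only: sum_delta2)
  qed
  have pt: "\<And>x j. pd j (trace_g (g_flat m) (\<lambda>x. f (x $ a) *\<^sub>R dsq a)) x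
     = (if j = a then deriv f (x $ a) / (m $ a)\<^sup>2 else 0)"
  proof -
    fix x j
    have "trace_g (g_flat m) (\<lambda>x. f (x $ a) *\<^sub>R dsq a) = (\<lambda>y. (\<lambda>s. f s / (m $ a)\<^sup>2) (y $ a))"
      using tr by auto
    moreover have "deriv (\<lambda>s. f s / (m $ a)\<^sup>2) (x $ a) = deriv f (x $ a) / (m $ a)\<^sup>2"
      by (rule DERIV_imp_deriv) (use mpos in \<open>auto intro!: derivative_eq_intros DERIV_deriv_iff_real_differentiable[THEN iffD2] fd simp: field_simps power2_eq_square\<close>)
    ultimately show "?thesis x j" using pd_coord[of j "\<lambda>s. f s / (m $ a)\<^sup>2" a x] by simp
  qed
  show ?thesis unfolding constraint_eqs_def using tr ns dt pt by simp
qed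



lemma pds_const: "pds is (\<lambda>_. c) = (\<lambda>_. if is = [] then c else 0)"
  by (induction "is") simp_all

lemma smooth_const: "smooth_fun (\<lambda>_::real^'n::finite. c)"
  unfolding smooth_fun_def pds_const by auto

lemma pds_coord:
  "pds is (\<lambda>x. h (x $ a)) = (\<lambda>x. if list_all (\<lambda>i. i = a) is then (deriv ^^ length is) h (x $ a) else 0)"
proof (induction "is")
  case Nil
  then show ?case by simp
next
  case (Cons i "is")
  show ?case
  proof (cases "list_all (\<lambda>i. i = a) is")
    case True
    then have e: "pds is (\<lambda>x. h (x $ a)) = (\<lambda>x. ((deriv ^^ length is) h) (x $ a))"
      using Cons by simp
    show ?thesis
      by (simp add: e pd_coord[of i "(deriv ^^ length is) h" a] fun_eq_iff True)
  next
    case False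
    then have e: "pds is (\<lambda>x. h (x $ a)) = (\<lambda>_. 0)"
      using Cons by simp
    show ?thesis using False by (simp add: e fun_eq_iff)
  qed
qed

lemma smooth_coord:
  assumes "smooth_real h"
  shows "smooth_fun (\<lambda>x::real^'n::finite. h (x $ a))"
proof -
  have d: "\<And>k s. ((deriv ^^ k) h) differentiable (at s)"
    using assms unfolding smooth_real_def by blast
  have c: "\<And>k. continuous_on UNIV ((deriv ^^ k) h)"
    by (simp add: continuous_at_imp_continuous_on d differentiable_imp_continuous_within)
  show ?thesis unfolding smooth_fun_def pds_coord
  proof (intro allI conjI)
    fix "is" :: "'n list"
    show "continuous_on UNIV (\<lambda>x::real^'n. if list_all (\<lambda>i. i = a) is then (deriv ^^ length is) h (x $ a) else 0)"
    proof (cases "list_all (\<lambda>i. i = a) is")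
      case True
      have "continuous_on UNIV (\<lambda>x::real^'n. (deriv ^^ length is) h (x $ a))"
        by (rule continuous_on_compose2[OF c[of "length is"]]) (auto intro: continuous_intros)
      then show ?thesis using True by simp
    qed simp
  next
    fix "is" :: "'n list" and i x
    show "(\<lambda>t. if list_all (\<lambda>i. i = a) is then (deriv ^^ length is) h ((x + t *\<^sub>R axis i 1) $ a) else 0) differentiable at 0"
    proof (cases "list_all (\<lambda>i. i = a) is \<and> i = a")
      case True
      have "(\<lambda>t. (deriv ^^ length is) h (x $ a + t)) differentiable at 0"
      proof -
        have "((deriv ^^ length is) h has_real_derivative deriv ((deriv ^^ length is) h) (x $ a)) (at (x $ a))"
          using d[of "length is" "x $ a"] by (simp add: DERIV_deriv_iff_real_differentiable)
        then have "((\<lambda>t. (deriv ^^ length is) h (t + x $ a)) has_real_derivative deriv ((deriv ^^ length is) h) (x $ a)) (at 0)"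
          using DERIV_shift[of "(deriv ^^ length is) h" _ 0 "x $ a"] by simp
        then show ?thesis unfolding real_differentiable_def by (auto simp: add.commute)
      qed
      moreover have "\<And>t. (x + t *\<^sub>R axis i 1) $ a = x $ a + t" using True by (simp add: axis_def)
      ultimately show ?thesis using True by simp
    next
      case False
      have "\<And>t. (if list_all (\<lambda>i. i = a) is then (deriv ^^ length is) h ((x + t *\<^sub>R axis i 1) $ a) else 0)
         = (if list_all (\<lambda>i. i = a) is then (deriv ^^ length is) h (x $ a) else 0)"
        using False by (cases "list_all (\<lambda>i. i = a) is") (auto simp: axis_def)
      then show ?thesis by simp
    qed
  qed
qed



lemma pd_Z: "pd i (\<lambda>y. (zf (y $ a) *\<^sub>R axis a 1) $ k) x = (if i = a \<and> k = a then deriv zf (x $ a) else 0)"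
proof -
  have "(\<lambda>y. (zf (y $ a) *\<^sub>R axis a (1::real)) $ k) = (\<lambda>y. if k = a then zf (y $ a) else 0)"
    by (auto simp: axis_def)
  then show ?thesis
    using pd_coord[of i "\<lambda>s. if k = a then zf s else 0" a x]
    by (cases "k = a") (auto simp: deriv_const0)
qed

lemma pd_cZ:
  assumes "\<And>s. zf differentiable (at s)"
  shows "pd i (\<lambda>y. (C *\<^sub>R (zf (y $ a) *\<^sub>R axis a 1)) $ k) x = (if i = a \<and> k = a then C * deriv zf (x $ a) else 0)"
proof -
  have "(\<lambda>y. (C *\<^sub>R (zf (y $ a) *\<^sub>R axis a (1::real))) $ k) = (\<lambda>y. if k = a then C * zf (y $ a) else 0)"
    by (auto simp: axis_def)
  moreover have "deriv (\<lambda>s. C * zf s) (x $ a) = C * deriv zf (x $ a)"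
    by (rule DERIV_imp_deriv) (auto intro!: derivative_eq_intros DERIV_deriv_iff_real_differentiable[THEN iffD2] assms)
  ultimately show ?thesis
    using pd_coord[of i "\<lambda>s. if k = a then C * zf s else 0" a x]
    by (cases "k = a") (auto simp: deriv_const0)
qed

lemma sum_if_eq[simp]: "(\<Sum>i\<in>(UNIV::'n::finite set). if i = a then f i else (0::real)) = f a"
  by (simp add: sum.delta)

lemma div_Z: "div_vf (g_flat l) (\<lambda>x. zf (x $ a) *\<^sub>R axis a 1) x = deriv zf (x $ a)"
  unfolding div_vf_def pd_Z by simp

lemma div_cZ: assumes "\<And>s. zf differentiable (at s)"
  shows "div_vf (g_flat l) (\<lambda>y. C *\<^sub>R (zf (y $ a) *\<^sub>R axis a 1)) x = C * deriv zf (x $ a)"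
  unfolding div_vf_def pd_cZ[OF assms] by simp

lemma lie_Z: "lie_metric (g_flat l) (\<lambda>x. zf (x $ a) *\<^sub>R axis a 1) x
   = (\<chi> i j. if i = a \<and> j = a then 2 * (l $ a)\<^sup>2 * deriv zf (x $ a) else 0)"
proof -
  have "\<And>i j k. zf (x $ a) * axis a 1 $ k * pd k (\<lambda>y. g_flat l y $ i $ j) x
     + g_flat l x $ k $ j * pd i (\<lambda>y. (zf (y $ a) *\<^sub>R axis a 1) $ k) x
     + g_flat l x $ i $ k * pd j (\<lambda>y. (zf (y $ a) *\<^sub>R axis a 1) $ k) x
     = (if k = a then (if i = a then g_flat l x $ a $ j * deriv zf (x $ a) else 0)
          + (if j = a then g_flat l x $ i $ a * deriv zf (x $ a) else 0) else 0)"
    unfolding pd_Z by (simp add: g_flat_def)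
  then have "\<And>i j. (lie_metric (g_flat l) (\<lambda>x. zf (x $ a) *\<^sub>R axis a 1) x) $ i $ j
     = (if i = a then g_flat l x $ a $ j * deriv zf (x $ a) else 0)
          + (if j = a then g_flat l x $ i $ a * deriv zf (x $ a) else 0)"
    unfolding lie_metric_def by simp
  then show ?thesis by (auto simp: vec_eq_iff g_flat_def)
qed



lemma core_K:
  fixes a :: "'n::finite" and l :: "real^'n" and \<mu> \<tau> c :: real and nf zf :: "real \<Rightarrow> real"
  assumes n3: "CARD('n) \<ge> 3" and cpos: "c > 0"
    and mu: "\<mu> = \<tau> * c powr qexp CARD('n)"
    and N_pos: "\<forall>s. nf s > 0"
    and zd: "\<And>s. zf differentiable (at s)"
  shows "cts_Kbar (g_flat l) (\<lambda>x. \<mu> *\<^sub>R sigma_flat a l x) \<tau> (\<lambda>x. zf (x $ a) *\<^sub>R axis a 1) (\<lambda>x. nf (x $ a)) (\<lambda>_. c) (\<lambda>x. zf (x $ a) *\<^sub>R axis a 1) x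
    = ((\<tau> + c powr (- qexp CARD('n)) * (1 / nf (x $ a)) * deriv zf (x $ a)) * (c powr ((qexp CARD('n) - 2) / 2) * l $ a)\<^sup>2) *\<^sub>R dsq a"
proof -
  define q where "q = qexp CARD('n)"
  define n where "n = real CARD('n)"
  define A where "A = c powr q"
  define B where "B = c powr 2"
  define N where "N = nf (x $ a)"
  define D where "D = deriv zf (x $ a)"
  have Apos: "A > 0" and Bpos: "B > 0" using cpos by (auto simp: A_def B_def)
  have npos: "n > 0" using n3 by (simp add: n_def)
  have Npos: "N > 0" using N_pos by (simp add: N_def)
  have p1: "c powr (-2) = 1 / B" unfolding B_def by (rule powr_minus_divide)
  have p2: "c powr (q - 2) = A / B" by (simp add: A_def B_def powr_diff)
  have p3: "c powr (- q) = 1 / A" unfolding A_def by (rule powr_minus_divide)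
  have p4: "c powr (- 2 * q) = 1 / A\<^sup>2"
  proof -
    have "c powr (- 2 * q) = c powr (- q + - q)" by simp
    also have "\<dots> = (1 / A) * (1 / A)" unfolding powr_add p3 ..
    finally show ?thesis by (simp add: power2_eq_square)
  qed
  have p5: "(c powr ((q - 2) / 2))\<^sup>2 = A / B"
  proof -
    have "(c powr ((q - 2) / 2))\<^sup>2 = c powr ((q - 2) / 2 + (q - 2) / 2)"
      unfolding powr_add power2_eq_square ..
    also have "(q - 2) / 2 + (q - 2) / 2 = q - 2" by simp
    finally show ?thesis using p2 by simp
  qed
  have mu': "\<mu> = \<tau> * A" using mu by (simp add: A_def q_def)
  show ?thesis
    unfolding cts_Kbar_def conf_killing_def cts_gbar_def lie_Z div_Z div_cZ[OF zd]
    unfolding q_def[symmetric] n_def[symmetric] N_def[symmetric] D_def[symmetric]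
    unfolding power_mult_distrib p1 p2 p3 p4 p5 mu'
    unfolding A_def[symmetric]
    apply (simp only: vec_eq_iff)
    apply (intro allI)
    subgoal for i j
      apply (cases "i = a"; cases "j = a")
      apply (simp_all add: sigma_flat_def g_flat_def kappa_def n_def[symmetric])
      using Apos Bpos npos Npos by (auto simp: field_simps power2_eq_square)
    done
qed


lemma gen:
  fixes a :: "'n::finite" and l :: "real^'n" and \<mu> \<tau> c :: real and nf zf :: "real \<Rightarrow> real"
  assumes n3: "CARD('n) \<ge> 3" and cpos: "c > 0"
    and mu: "\<mu> = \<tau> * c powr qexp CARD('n)"
    and lpos: "\<forall>k. l $ k > 0"
    and N_smooth: "smooth_real nf" and N_pos: "\<forall>s. nf s > 0"
    and z_smooth: "smooth_real zf" and z_per: "\<forall>s. zf (s + 1) = zf s"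
  shows "cts_solution (g_flat l) (\<lambda>x. \<mu> *\<^sub>R sigma_flat a l x) \<tau> (\<lambda>x. zf (x $ a) *\<^sub>R axis a 1) (\<lambda>x. nf (x $ a)) (\<lambda>_. c) (\<lambda>x. zf (x $ a) *\<^sub>R axis a 1)
    \<and> cts_gbar (g_flat l) (\<lambda>_. c) = g_flat (c powr ((qexp CARD('n) - 2) / 2) *\<^sub>R l)
    \<and> cts_Kbar (g_flat l) (\<lambda>x. \<mu> *\<^sub>R sigma_flat a l x) \<tau> (\<lambda>x. zf (x $ a) *\<^sub>R axis a 1) (\<lambda>x. nf (x $ a)) (\<lambda>_. c) (\<lambda>x. zf (x $ a) *\<^sub>R axis a 1)
      = (\<lambda>x. ((\<tau> + c powr (- qexp CARD('n)) * (1 / nf (x $ a)) * div_vf (g_flat l) (\<lambda>x. zf (x $ a) *\<^sub>R axis a 1) x)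
            * (c powr ((qexp CARD('n) - 2) / 2) * l $ a)\<^sup>2) *\<^sub>R dsq a)"
proof -
  define q where "q = qexp CARD('n)"
  define r where "r = c powr ((q - 2) / 2)"
  have zd: "\<And>s. zf differentiable (at s)"
    using z_smooth unfolding smooth_real_def by (metis funpow_0)
  have zd1: "\<And>s. deriv zf differentiable (at s)"
    using z_smooth unfolding smooth_real_def by (metis funpow_0 funpow_Suc_right o_apply One_nat_def comp_id funpow.simps(2))
  have nd: "\<And>s. nf differentiable (at s)"
    using N_smooth unfolding smooth_real_def by (metis funpow_0)
  have rpos: "r > 0" using cpos by (simp add: r_def)
  have r2: "r\<^sup>2 = c powr (q - 2)"
  proof -
    have "r\<^sup>2 = c powr ((q - 2) / 2 + (q - 2) / 2)"
      unfolding r_def powr_add power2_eq_square ..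
    also have "(q - 2) / 2 + (q - 2) / 2 = q - 2" by simp
    finally show ?thesis .
  qed
  have K: "cts_Kbar (g_flat l) (\<lambda>x. \<mu> *\<^sub>R sigma_flat a l x) \<tau> (\<lambda>x. zf (x $ a) *\<^sub>R axis a 1) (\<lambda>x. nf (x $ a)) (\<lambda>_. c) (\<lambda>x. zf (x $ a) *\<^sub>R axis a 1)
      = (\<lambda>x. ((\<tau> + c powr (- q) * (1 / nf (x $ a)) * div_vf (g_flat l) (\<lambda>x. zf (x $ a) *\<^sub>R axis a 1) x)
            * (r * l $ a)\<^sup>2) *\<^sub>R dsq a)"
    unfolding div_Z using core_K[OF n3 cpos mu N_pos zd] by (simp add: fun_eq_iff q_def r_def)
  have G: "cts_gbar (g_flat l) (\<lambda>_. c) = g_flat (r *\<^sub>R l)"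
    by (simp add: fun_eq_iff vec_eq_iff cts_gbar_def g_flat_def power_mult_distrib r2 q_def)
  define f where "f = (\<lambda>s. (\<tau> + c powr (- q) * (1 / nf s) * deriv zf s) * (r * l $ a)\<^sup>2)"
  have fd: "\<And>s. f differentiable (at s)"
    unfolding f_def using nd zd1 N_pos
    by (auto intro!: derivative_intros simp: less_imp_neq[symmetric])
  have Kf: "cts_Kbar (g_flat l) (\<lambda>x. \<mu> *\<^sub>R sigma_flat a l x) \<tau> (\<lambda>x. zf (x $ a) *\<^sub>R axis a 1) (\<lambda>x. nf (x $ a)) (\<lambda>_. c) (\<lambda>x. zf (x $ a) *\<^sub>R axis a 1)
      = (\<lambda>x. f (x $ a) *\<^sub>R dsq a)"
    unfolding K div_Z f_def ..
  have CE: "constraint_eqs (g_flat (r *\<^sub>R l)) (\<lambda>x. f (x $ a) *\<^sub>R dsq a)"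
    by (rule constraint_flat) (use rpos lpos fd in \<open>auto simp: less_imp_neq[symmetric]\<close>)
  have TV: "torus_vf (\<lambda>x. zf (x $ a) *\<^sub>R axis a 1)"
    unfolding torus_vf_def
  proof
    fix i
    show "torus_fun (\<lambda>x. (zf (x $ a) *\<^sub>R axis a 1) $ i)"
    proof (cases "i = a")
      case True
      have e: "(\<lambda>x. (zf (x $ a) *\<^sub>R axis a (1::real)) $ i) = (\<lambda>x. zf (x $ a))" using True by (simp add: axis_def)
      have "periodic_fun (\<lambda>x::real^'n. zf (x $ a))"
        unfolding periodic_fun_def
      proof (intro allI)
        fix x :: "real^'n" and j
        show "zf ((x + axis j 1) $ a) = zf (x $ a)"
          using z_per by (cases "j = a") (auto simp: axis_def)
      qed
      then show ?thesis unfolding e torus_fun_def using smooth_coord[OF z_smooth] by simp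
    next
      case False
      have e: "(\<lambda>x. (zf (x $ a) *\<^sub>R axis a (1::real)) $ i) = (\<lambda>_. 0)" using False by (simp add: axis_def)
      show ?thesis unfolding e torus_fun_def periodic_fun_def using smooth_const by simp
    qed
  qed
  have TF: "torus_fun (\<lambda>_::real^'n. c)"
    unfolding torus_fun_def periodic_fun_def using smooth_const by simp
  show ?thesis
    unfolding q_def[symmetric] r_def[symmetric]
    using K G CE TV TF cpos unfolding cts_solution_def Kf G by simp
qed


theorem proposition7p3:
  fixes a :: "'n::finite" and l :: "real^'n" and \<mu> \<tau> :: real
    and nf zf :: "real \<Rightarrow> real"
  defines "N \<equiv> (\<lambda>x::real^'n. nf (x $ a))"
    and "Z \<equiv> (\<lambda>x::real^'n. zf (x $ a) *\<^sub>R axis a 1)"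
    and "q \<equiv> qexp CARD('n)"
  assumes n3: "CARD('n) \<ge> 3"
    and lpos: "\<forall>k. l $ k > 0"
    and N_smooth: "smooth_real nf" and N_per: "\<forall>s. nf (s + 1) = nf s"
    and N_pos: "\<forall>s. nf s > 0"
    and z_smooth: "smooth_real zf" and z_per: "\<forall>s. zf (s + 1) = zf s"
  shows
    "(\<mu> \<noteq> 0 \<and> \<tau> \<noteq> 0 \<and> \<mu> * \<tau> > 0 \<longrightarrow>
       (let c = (\<mu> / \<tau>) powr (1 / q); r = c powr ((q - 2) / 2);
            \<tau>b = (\<lambda>x. \<tau> + c powr (- q) * (1 / N x) * div_vf (g_flat l) Z x) in
        cts_solution (g_flat l) (\<lambda>x. \<mu> *\<^sub>R sigma_flat a l x) \<tau> Z N (\<lambda>_. c) Z \<and>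
        cts_gbar (g_flat l) (\<lambda>_. c) = g_flat (r *\<^sub>R l) \<and>
        cts_Kbar (g_flat l) (\<lambda>x. \<mu> *\<^sub>R sigma_flat a l x) \<tau> Z N (\<lambda>_. c) Z
          = (\<lambda>x. (\<tau>b x * (r * l $ a)\<^sup>2) *\<^sub>R dsq a) \<and>
        r = (\<mu> / \<tau>) powr (1 / real CARD('n))))
     \<and>
     (\<mu> = 0 \<and> \<tau> = 0 \<longrightarrow>
       (\<forall>c::real. c > 0 \<longrightarrow>
         (let r = c powr ((q - 2) / 2);
              \<tau>b = (\<lambda>x. c powr (- q) * (1 / N x) * div_vf (g_flat l) Z x) in
          cts_solution (g_flat l) (\<lambda>x. \<mu> *\<^sub>R sigma_flat a l x) \<tau> Z N (\<lambda>_. c) Z \<and>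
          cts_gbar (g_flat l) (\<lambda>_. c) = g_flat (r *\<^sub>R l) \<and>
          cts_Kbar (g_flat l) (\<lambda>x. \<mu> *\<^sub>R sigma_flat a l x) \<tau> Z N (\<lambda>_. c) Z
            = (\<lambda>x. (\<tau>b x * (r * l $ a)\<^sup>2) *\<^sub>R dsq a))))"
proof -
  have q_eq: "q = 2 * real CARD('n) / (real CARD('n) - 2)" unfolding q_def qexp_def ..
  have qpos: "q > 0" using n3 unfolding q_eq by (auto intro!: divide_pos_pos)
  have part1: "\<mu> \<noteq> 0 \<and> \<tau> \<noteq> 0 \<and> \<mu> * \<tau> > 0 \<longrightarrow>
       (let c = (\<mu> / \<tau>) powr (1 / q); r = c powr ((q - 2) / 2);
            \<tau>b = (\<lambda>x. \<tau> + c powr (- q) * (1 / N x) * div_vf (g_flat l) Z x) in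
        cts_solution (g_flat l) (\<lambda>x. \<mu> *\<^sub>R sigma_flat a l x) \<tau> Z N (\<lambda>_. c) Z \<and>
        cts_gbar (g_flat l) (\<lambda>_. c) = g_flat (r *\<^sub>R l) \<and>
        cts_Kbar (g_flat l) (\<lambda>x. \<mu> *\<^sub>R sigma_flat a l x) \<tau> Z N (\<lambda>_. c) Z
          = (\<lambda>x. (\<tau>b x * (r * l $ a)\<^sup>2) *\<^sub>R dsq a) \<and>
        r = (\<mu> / \<tau>) powr (1 / real CARD('n)))"
  proof
    assume h: "\<mu> \<noteq> 0 \<and> \<tau> \<noteq> 0 \<and> \<mu> * \<tau> > 0"
    have mt: "\<mu> / \<tau> > 0"
    proof -
      have "\<mu> / \<tau> = (\<mu> * \<tau>) / (\<tau> * \<tau>)" using h by simp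
      moreover have "\<tau> * \<tau> > 0" using h by (auto simp: zero_less_mult_iff linorder_neq_iff)
      ultimately show ?thesis using h by (metis divide_pos_pos)
    qed
    define c where "c = (\<mu> / \<tau>) powr (1 / q)"
    have cpos: "c > 0" using mt h by (simp add: c_def)
    have cq: "c powr q = \<mu> / \<tau>" unfolding c_def powr_powr using qpos mt by (simp del: abs_divide add: abs_divide[symmetric])
    have mu: "\<mu> = \<tau> * c powr qexp CARD('n)" using cq h by (simp add: q_def[symmetric])
    have expo: "1 / q * ((q - 2) / 2) = 1 / real CARD('n)"
      using n3 unfolding q_eq by (simp add: field_simps)
    have rr: "c powr ((q - 2) / 2) = (\<mu> / \<tau>) powr (1 / real CARD('n))"
      unfolding c_def powr_powr expo ..
    show "let c = (\<mu> / \<tau>) powr (1 / q); r = c powr ((q - 2) / 2);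
            \<tau>b = (\<lambda>x. \<tau> + c powr (- q) * (1 / N x) * div_vf (g_flat l) Z x) in
        cts_solution (g_flat l) (\<lambda>x. \<mu> *\<^sub>R sigma_flat a l x) \<tau> Z N (\<lambda>_. c) Z \<and>
        cts_gbar (g_flat l) (\<lambda>_. c) = g_flat (r *\<^sub>R l) \<and>
        cts_Kbar (g_flat l) (\<lambda>x. \<mu> *\<^sub>R sigma_flat a l x) \<tau> Z N (\<lambda>_. c) Z
          = (\<lambda>x. (\<tau>b x * (r * l $ a)\<^sup>2) *\<^sub>R dsq a) \<and>
        r = (\<mu> / \<tau>) powr (1 / real CARD('n))"
      unfolding Let_def c_def[symmetric] rr[symmetric]
      using gen[OF n3 cpos mu lpos N_smooth N_pos z_smooth z_per, of a]
      unfolding N_def Z_def q_def by simp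
  qed
  have part2: "\<mu> = 0 \<and> \<tau> = 0 \<longrightarrow>
       (\<forall>c::real. c > 0 \<longrightarrow>
         (let r = c powr ((q - 2) / 2);
              \<tau>b = (\<lambda>x. c powr (- q) * (1 / N x) * div_vf (g_flat l) Z x) in
          cts_solution (g_flat l) (\<lambda>x. \<mu> *\<^sub>R sigma_flat a l x) \<tau> Z N (\<lambda>_. c) Z \<and>
          cts_gbar (g_flat l) (\<lambda>_. c) = g_flat (r *\<^sub>R l) \<and>
          cts_Kbar (g_flat l) (\<lambda>x. \<mu> *\<^sub>R sigma_flat a l x) \<tau> Z N (\<lambda>_. c) Z
            = (\<lambda>x. (\<tau>b x * (r * l $ a)\<^sup>2) *\<^sub>R dsq a)))"
  proof (intro impI allI)
    fix c :: real
    assume h: "\<mu> = 0 \<and> \<tau> = 0" and cpos: "c > 0"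
    have mu: "\<mu> = \<tau> * c powr qexp CARD('n)" using h by simp
    show "let r = c powr ((q - 2) / 2);
              \<tau>b = (\<lambda>x. c powr (- q) * (1 / N x) * div_vf (g_flat l) Z x) in
          cts_solution (g_flat l) (\<lambda>x. \<mu> *\<^sub>R sigma_flat a l x) \<tau> Z N (\<lambda>_. c) Z \<and>
          cts_gbar (g_flat l) (\<lambda>_. c) = g_flat (r *\<^sub>R l) \<and>
          cts_Kbar (g_flat l) (\<lambda>x. \<mu> *\<^sub>R sigma_flat a l x) \<tau> Z N (\<lambda>_. c) Z
            = (\<lambda>x. (\<tau>b x * (r * l $ a)\<^sup>2) *\<^sub>R dsq a)"
      unfolding Let_def
      using gen[OF n3 cpos mu lpos N_smooth N_pos z_smooth z_per, of a] h
      unfolding N_def Z_def q_def by simp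
  qed
  show ?thesis using part1 part2 by blast
qed


end
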